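(* Let $m\ge1$, $\delta>-m$, $\tau=3+\delta/m$, let $k>m$ be an integer and $t\in(0,1)$. Consider the Pólya point tree with parameters $m,\delta$, with root $\phi$ of age $U_\phi$ and degree $d_\phi$; its children $\phi1,\dots,\phi m$ are the older (label $o$) children and $\phi(m+1),\phi(m+2),\dots$ are the younger (label $y$) children listed in increasing order of age, with ages $A_{m+1}\le A_{m+2}\le\dots$ given by the points of the Cox process. Let $\pi$ be a uniformly random permutation of $\{m+1,\dots,k\}$, independent of everything else. (a) Conditionally on $U_\phi=t$ and $d_\phi=k$, the ages $(A_{\pi_j})_{j=m+1}^k$ of the $k-m$ younger children of the root are i.i.d., each distributed as a random variable $A^{(t)}_{\pi_{m+1}}$ with Lebesgue density $$f_{t,\tau}(x)=\mathbb{1}_{[t,1]}(x)\frac{x^{\frac{1}{\tau-1}-1}}{(\tau-1)(1-t^{\frac{1}{\tau-1}})}.$$ (b) For every $t\in(0,1)$, $A^{(t)}_{\pi_{m+1}}$ is stochastically bounded from below by a random variable $A^{(0)}_{\pi_{m+1}}$ with density $f_{0,\tau}(x)=\mathbb{1}_{[0,1]}(x)\frac{x^{\frac{1}{\tau-1}-1}}{\tau-1}$, i.e. $\mathbb{P}(A^{(0)}_{\pi_{m+1}}\ge x)\le\mathbb{P}(A^{(t)}_{\pi_{m+1}}\ge x)$ for all $x\in\mathbb{R}$.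
   Context: Pólya point tree with parameters $m\in\mathbb{N}$, $\delta>-m$: a random rooted tree; each vertex $w$ has an age $A_w\in[0,1]$ and, except the root, a label in $\{y,o\}$. The root has age $U_\phi\sim\mathrm{Unif}[0,1]$ and no label. A vertex $w$ has $m_-(w)$ children of label $o$, with $m_-(w)=m-1$ if $w$ has label $y$ and $m_-(w)=m$ otherwise (root or label $o$), with ages $U_{wj}^{\chi}A_w$ ($U_{wj}$ i.i.d. uniform on $[0,1]$, $\chi=\frac{m+\delta}{2m+\delta}$), and further children of label $y$ whose ages are the ordered points of a Cox process on $[A_w,1]$ with intensity $\frac{\Gamma_w}{\tau-1}\frac{x^{1/(\tau-1)-1}}{A_w^{1/(\tau-1)}}dx$, where, independently of everything else, $\Gamma_w\sim\mathrm{Gamma}(m+\delta+1,1)$ if $w$ has label $o$ and $\Gamma_w\sim\mathrm{Gamma}(m+\delta,1)$ otherwise. Edges join each vertex to its children; the root's degree $d_\phi$ is its number of children. *)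

theory Defs
  imports "HOL-Probability.Probability"
begin

definition gamma_dens :: "real \<Rightarrow> real \<Rightarrow> real" where
  "gamma_dens a x = (if x > 0 then x powr (a - 1) * exp (- x) / Gamma a else 0)"

definition tau_par :: "nat \<Rightarrow> real \<Rightarrow> real" where
  "tau_par m \<delta> = 3 + \<delta> / real m"

(* intensity of the Cox process of younger children of a vertex of age a,
   given Gamma_w = g, at the point x (zero outside [a,1]) *)
definition cox_intensity :: "real \<Rightarrow> real \<Rightarrow> real \<Rightarrow> real \<Rightarrow> real" where
  "cox_intensity \<tau> a g x =
     indicator {a..1} x * (g / (\<tau> - 1)) * x powr (1 / (\<tau> - 1) - 1) / a powr (1 / (\<tau> - 1))"

definition cox_mean :: "real \<Rightarrow> real \<Rightarrow> real \<Rightarrow> real set \<Rightarrow> real" where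
  "cox_mean \<tau> a g B = (LINT x:B|lborel. cox_intensity \<tau> a g x)"

definition poisson_prob :: "real \<Rightarrow> nat \<Rightarrow> real" where
  "poisson_prob r c = exp (- r) * r ^ c / fact c"

definition young_count :: "nat \<Rightarrow> nat \<Rightarrow> (nat \<Rightarrow> real) \<Rightarrow> real set \<Rightarrow> nat" where
  "young_count m N A S = card {j. m < j \<and> j \<le> m + N \<and> A j \<in> S}"

(* The root of the Polya point tree with parameters m, delta, conditioned on U_phi = t:
   Gam is Gamma_phi ~ Gamma(m+delta,1); N is the number of younger children of the root
   (so d_phi = m + N); A j (m < j <= m + N) are the ages of the younger children phi j,
   in increasing order; given Gam = g they form a Poisson process on [t,1] with intensity
   cox_intensity tau t g (i.e. a Cox process directed by Gam). *)
definition polya_root_younger ::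
  "'w measure \<Rightarrow> nat \<Rightarrow> real \<Rightarrow> real \<Rightarrow> ('w \<Rightarrow> real) \<Rightarrow> ('w \<Rightarrow> nat) \<Rightarrow> ('w \<Rightarrow> nat \<Rightarrow> real) \<Rightarrow> bool"
where
  "polya_root_younger M m \<delta> t Gam N A \<longleftrightarrow>
     prob_space M \<and>
     Gam \<in> borel_measurable M \<and>
     N \<in> measurable M (count_space UNIV) \<and>
     A \<in> measurable M (Pi\<^sub>M UNIV (\<lambda>_. borel)) \<and>
     distributed M lborel Gam (\<lambda>x. ennreal (gamma_dens (real m + \<delta>) x)) \<and>
     (\<forall>\<omega>\<in>space M. \<forall>i j. m < i \<longrightarrow> i \<le> j \<longrightarrow> j \<le> m + N \<omega> \<longrightarrow> A \<omega> i \<le> A \<omega> j) \<and>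
     (\<forall>n (B :: nat \<Rightarrow> real set) (c :: nat \<Rightarrow> nat) G.
        G \<in> sets borel \<longrightarrow> (\<forall>i<n. B i \<in> sets borel) \<longrightarrow> disjoint_family_on B {..<n} \<longrightarrow>
        measure M {\<omega> \<in> space M. Gam \<omega> \<in> G \<and> (\<forall>i<n. young_count m (N \<omega>) (A \<omega>) (B i) = c i)}
        = (\<integral>\<omega>. indicator G (Gam \<omega>) *
              (\<Prod>i<n. poisson_prob (cox_mean (tau_par m \<delta>) t (Gam \<omega>) (B i)) (c i)) \<partial>M))"

definition f_dens :: "real \<Rightarrow> real \<Rightarrow> real \<Rightarrow> real" where
  "f_dens t \<tau> x = indicator {t..1} x * x powr (1 / (\<tau> - 1) - 1)
                    / ((\<tau> - 1) * (1 - t powr (1 / (\<tau> - 1))))"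

end

theory Submission
  imports Defs "HOL-Combinatorics.Multiset_Permutations"
begin

lemma powr_int:
  fixes a b e :: real
  assumes a: "0 \<le> a" and ab: "a \<le> b" and e: "e > -1"
  shows "set_integrable lborel {a..b} (\<lambda>x::real. x powr e)"
    "(LINT x:{a..b}|lborel. x powr e) = (b powr (e+1) - a powr (e+1))/(e+1)"
proof -
  have hb: "((\<lambda>x. x powr e) has_integral (b powr (e+1)/(e+1))) {0..b}"
    using has_integral_powr_from_0[OF e] a ab by auto
  have ha: "((\<lambda>x. x powr e) has_integral (a powr (e+1)/(e+1))) {0..a}"
    using has_integral_powr_from_0[OF e] a by auto
  have "(\<lambda>x. x powr e) integrable_on {a..b}"
    by (rule integrable_subinterval_real[OF has_integral_integrable[OF hb]]) (use a in auto)
  then obtain X where hX: "((\<lambda>x. x powr e) has_integral X) {a..b}" by (auto simp: integrable_on_def)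
  have "((\<lambda>x. x powr e) has_integral (a powr (e+1)/(e+1) + X)) {0..b}"
    by (rule has_integral_combine[OF a ab ha hX])
  then have "a powr (e+1)/(e+1) + X = b powr (e+1)/(e+1)" using hb has_integral_unique by blast
  then have Xv: "X = (b powr (e+1) - a powr (e+1))/(e+1)" by (simp add: diff_divide_distrib)
  have abs: "(\<lambda>x. x powr e) absolutely_integrable_on {a..b}"
    by (rule nonnegative_absolutely_integrable_1) (use hX in \<open>auto simp: integrable_on_def\<close>)
  have meas: "(\<lambda>x. indicator {a..b} x *\<^sub>R (x::real) powr e) \<in> borel_measurable lborel" by measurable
  show si: "set_integrable lborel {a..b} (\<lambda>x::real. x powr e)"
    using abs meas unfolding set_integrable_def
    by (simp add: integrable_completion)
  show "(LINT x:{a..b}|lborel. x powr e) = (b powr (e+1) - a powr (e+1))/(e+1)"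
    using set_borel_integral_eq_integral(2)[OF si] hX Xv by (simp add: integral_unique)
qed

locale ppt = prob_space M for M :: "'w measure" +
  fixes m :: nat and \<delta> t :: real
    and Gam :: "'w \<Rightarrow> real" and N :: "'w \<Rightarrow> nat" and A :: "'w \<Rightarrow> nat \<Rightarrow> real"
  assumes m: "m \<ge> 1" and \<delta>: "\<delta> > - real m" and t: "0 < t" "t < 1"
    and root: "polya_root_younger M m \<delta> t Gam N A"
begin

definition "tau = tau_par m \<delta>"
definition "al = 1 / (tau - 1)"
definition "w x = indicator {t..1} x * x powr (al - 1) / (tau - 1)"
definition "nu B = (LINT x:B|lborel. w x)"
definition "Z = nu UNIV"
definition "T = t powr al"

lemma tau1: "tau - 1 > 1"
proof -
  have "\<delta> / real m > -1" using m \<delta> by (simp add: field_simps)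
  then show ?thesis unfolding tau_def tau_par_def by simp
qed

lemma al_pos: "al > 0" and al_lt1: "al < 1" and al_tau: "al * (tau - 1) = 1"
  using tau1 unfolding al_def by (auto simp: field_simps)

lemma w_nonneg: "w x \<ge> 0"
  using tau1 unfolding w_def by (auto simp: indicator_def)

lemma w_meas[measurable]: "w \<in> borel_measurable borel"
  unfolding w_def by measurable

lemma w_int: "integrable lborel w"
proof -
  have "set_integrable lborel {t..1} (\<lambda>x::real. x powr (al - 1))"
    using powr_int(1)[of t 1 "al - 1"] t al_pos by auto
  then have "integrable lborel (\<lambda>x. indicator {t..1} x * x powr (al - 1))"
    unfolding set_integrable_def by simp
  then have "integrable lborel (\<lambda>x. indicator {t..1} x * x powr (al - 1) / (tau - 1))"
    by (rule integrable_divide)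
  then show ?thesis unfolding w_def[abs_def] .
qed

lemma w_setint: "B \<in> sets borel \<Longrightarrow> set_integrable lborel B w"
  unfolding set_integrable_def using w_int by (intro integrable_mult_indicator) auto

lemma nu_nonneg: "nu B \<ge> 0"
  unfolding nu_def set_lebesgue_integral_def
  by (intro integral_nonneg_AE) (auto simp: w_nonneg indicator_def)

lemma Z_val: "Z = 1 - T"
proof -
  have "Z = (\<integral>x. indicator {t..1} x * x powr (al - 1) / (tau - 1) \<partial>lborel)"
    unfolding Z_def nu_def w_def set_lebesgue_integral_def by simp
  also have "\<dots> = (LINT x:{t..1}|lborel. x powr (al - 1)) / (tau - 1)"
    unfolding set_lebesgue_integral_def by simp
  also have "\<dots> = ((1 powr (al - 1 + 1) - t powr (al - 1 + 1)) / (al - 1 + 1)) / (tau - 1)"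
    using powr_int(2)[of t 1 "al - 1"] t al_pos by auto
  also have "\<dots> = 1 - T"
    using al_tau al_pos tau1 unfolding T_def by (simp add: field_simps)
  finally show ?thesis .
qed

lemma T_pos: "T > 0" and T_lt1: "T < 1"
  unfolding T_def using t al_pos powr_less_mono2[of al t 1] by auto

lemma Z_pos: "Z > 0" using Z_val T_lt1 by simp

lemma nu_add:
  assumes "finite S" "disjoint_family_on C S" "\<And>i. i \<in> S \<Longrightarrow> C i \<in> sets borel"
  shows "nu (\<Union>i\<in>S. C i) = (\<Sum>i\<in>S. nu (C i))"
proof -
  have "nu (\<Union>i\<in>S. C i) = (\<integral>x. (\<Sum>i\<in>S. indicator (C i) x * w x) \<partial>lborel)"
    unfolding nu_def set_lebesgue_integral_def
    by (simp add: indicator_UN_disjoint[OF assms(1,2)] sum_distrib_right)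
  also have "\<dots> = (\<Sum>i\<in>S. nu (C i))"
    unfolding nu_def set_lebesgue_integral_def
    by (subst Bochner_Integration.integral_sum) (use w_setint assms(3) in \<open>auto simp: set_integrable_def\<close>)
  finally show ?thesis .
qed

lemma cox_mean_eq: "cox_mean tau t g B = g * nu B / T"
proof -
  have "cox_intensity tau t g = (\<lambda>x. (g / T) * w x)"
    unfolding cox_intensity_def w_def T_def al_def by (rule ext) (simp add: field_simps)
  then have "cox_mean tau t g B = (LINT x:B|lborel. (g / T) * w x)"
    unfolding cox_mean_def by (simp only:)
  also have "\<dots> = g * nu B / T" unfolding nu_def by simp
  finally show ?thesis .
qed

lemma f_dens_eq: "f_dens t tau x = w x / Z"
  unfolding f_dens_def w_def Z_val T_def al_def by simp

lemma f_dens_int: "(LINT x:B|lborel. f_dens t tau x) = nu B / Z"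
  unfolding f_dens_eq nu_def
  by (metis set_integral_divide_zero)


lemma R: "prob_space M \<and> Gam \<in> borel_measurable M \<and> N \<in> measurable M (count_space UNIV) \<and>
     A \<in> measurable M (Pi\<^sub>M UNIV (\<lambda>_. borel)) \<and>
     distributed M lborel Gam (\<lambda>x. ennreal (gamma_dens (real m + \<delta>) x)) \<and>
     (\<forall>\<omega>\<in>space M. \<forall>i j. m < i \<longrightarrow> i \<le> j \<longrightarrow> j \<le> m + N \<omega> \<longrightarrow> A \<omega> i \<le> A \<omega> j) \<and>
     (\<forall>n (B :: nat \<Rightarrow> real set) (c :: nat \<Rightarrow> nat) G.
        G \<in> sets borel \<longrightarrow> (\<forall>i<n. B i \<in> sets borel) \<longrightarrow> disjoint_family_on B {..<n} \<longrightarrow>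
        measure M {\<omega> \<in> space M. Gam \<omega> \<in> G \<and> (\<forall>i<n. young_count m (N \<omega>) (A \<omega>) (B i) = c i)}
        = (\<integral>\<omega>. indicator G (Gam \<omega>) *
              (\<Prod>i<n. poisson_prob (cox_mean (tau_par m \<delta>) t (Gam \<omega>) (B i)) (c i)) \<partial>M))"
  using root unfolding polya_root_younger_def .

lemma Gam_meas[measurable]: "Gam \<in> borel_measurable M"
  using R by (elim conjE)
lemma N_meas[measurable]: "N \<in> measurable M (count_space UNIV)"
  using R by (elim conjE)
lemma A_meas[measurable]: "A \<in> measurable M (Pi\<^sub>M UNIV (\<lambda>_. borel))"
  using R by (elim conjE)
lemma Gam_distr: "distributed M lborel Gam (\<lambda>x. ennreal (gamma_dens (real m + \<delta>) x))"
  using R by (elim conjE)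
lemma hyp: "\<And>n (B :: nat \<Rightarrow> real set) (c :: nat \<Rightarrow> nat) G.
        G \<in> sets borel \<Longrightarrow> (\<forall>i<n. B i \<in> sets borel) \<Longrightarrow> disjoint_family_on B {..<n} \<Longrightarrow>
        measure M {\<omega> \<in> space M. Gam \<omega> \<in> G \<and> (\<forall>i<n. young_count m (N \<omega>) (A \<omega>) (B i) = c i)}
        = (\<integral>\<omega>. indicator G (Gam \<omega>) *
              (\<Prod>i<n. poisson_prob (cox_mean (tau_par m \<delta>) t (Gam \<omega>) (B i)) (c i)) \<partial>M)"
proof -
  fix n and B :: "nat \<Rightarrow> real set" and c :: "nat \<Rightarrow> nat" and G :: "real set"
  assume a: "G \<in> sets borel" "\<forall>i<n. B i \<in> sets borel" "disjoint_family_on B {..<n}"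
  from R have H: "\<forall>n (B :: nat \<Rightarrow> real set) (c :: nat \<Rightarrow> nat) G.
        G \<in> sets borel \<longrightarrow> (\<forall>i<n. B i \<in> sets borel) \<longrightarrow> disjoint_family_on B {..<n} \<longrightarrow>
        measure M {\<omega> \<in> space M. Gam \<omega> \<in> G \<and> (\<forall>i<n. young_count m (N \<omega>) (A \<omega>) (B i) = c i)}
        = (\<integral>\<omega>. indicator G (Gam \<omega>) *
              (\<Prod>i<n. poisson_prob (cox_mean (tau_par m \<delta>) t (Gam \<omega>) (B i)) (c i)) \<partial>M)"
    by (elim conjE)
  show "measure M {\<omega> \<in> space M. Gam \<omega> \<in> G \<and> (\<forall>i<n. young_count m (N \<omega>) (A \<omega>) (B i) = c i)}
        = (\<integral>\<omega>. indicator G (Gam \<omega>) *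
              (\<Prod>i<n. poisson_prob (cox_mean (tau_par m \<delta>) t (Gam \<omega>) (B i)) (c i)) \<partial>M)"
    using H a by blast
qed

lemma A_comp_meas[measurable]: "(\<lambda>\<omega>. A \<omega> i) \<in> borel_measurable M"
  using measurable_comp[OF A_meas measurable_component_singleton[of i UNIV "\<lambda>_. borel"]]
  by (simp add: o_def)

lemma N_pred[measurable]: "Measurable.pred M (\<lambda>\<omega>. N \<omega> = j)"
  by measurable

lemma hyp_fin:
  fixes C :: "'i \<Rightarrow> real set" and c :: "'i \<Rightarrow> nat"
  assumes S: "finite S" and disj: "disjoint_family_on C S" and Cb: "\<And>i. i \<in> S \<Longrightarrow> C i \<in> sets borel"
  shows "measure M {\<omega> \<in> space M. \<forall>i\<in>S. young_count m (N \<omega>) (A \<omega>) (C i) = c i}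
     = (\<integral>\<omega>. (\<Prod>i\<in>S. poisson_prob (cox_mean tau t (Gam \<omega>) (C i)) (c i)) \<partial>M)"
proof -
  obtain h where h: "bij_betw h {0..<card S} S" using ex_bij_betw_nat_finite[OF S] by blast
  have h': "bij_betw h {..<card S} S" using h by (simp add: lessThan_atLeast0)
  have inj: "inj_on h {..<card S}" using bij_betw_imp_inj_on[OF h'] .
  have img: "h ` {..<card S} = S" using bij_betw_imp_surj_on[OF h'] .
  have d: "disjoint_family_on (C \<circ> h) {..<card S}"
  proof (unfold disjoint_family_on_def, intro ballI impI)
    fix i j assume ij: "i \<in> {..<card S}" "j \<in> {..<card S}" "i \<noteq> j"
    have "h i \<noteq> h j" using inj ij unfolding inj_on_def by blast
    moreover have "h i \<in> S" "h j \<in> S" using ij img by blast+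
    ultimately show "(C \<circ> h) i \<inter> (C \<circ> h) j = {}" using disj unfolding disjoint_family_on_def by simp
  qed
  have b: "\<forall>i<card S. (C \<circ> h) i \<in> sets borel"
  proof (intro allI impI)
    fix i assume "i < card S"
    then have "h i \<in> S" using img by blast
    then show "(C \<circ> h) i \<in> sets borel" using Cb by simp
  qed
  note H = hyp[of UNIV "card S" "C \<circ> h" "c \<circ> h", OF _ b d]
  have e1: "(\<forall>i<card S. P (h i)) \<longleftrightarrow> (\<forall>i\<in>S. P i)" for P
  proof
    assume "\<forall>i<card S. P (h i)"
    then show "\<forall>i\<in>S. P i" using img by (metis imageE lessThan_iff)
  next
    assume "\<forall>i\<in>S. P i"
    then show "\<forall>i<card S. P (h i)" using img by blast
  qed
  have e2: "(\<Prod>i<card S. poisson_prob (cox_mean (tau_par m \<delta>) t (Gam \<omega>) ((C \<circ> h) i)) ((c \<circ> h) i))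
      = (\<Prod>i\<in>S. poisson_prob (cox_mean tau t (Gam \<omega>) (C i)) (c i))" for \<omega>
    unfolding tau_def using prod.reindex_bij_betw[OF h', of "\<lambda>i. poisson_prob (cox_mean (tau_par m \<delta>) t (Gam \<omega>) (C i)) (c i)"]
    by (simp add: o_def)
  have e1': "(\<forall>i<card S. young_count m (N \<omega>) (A \<omega>) ((C \<circ> h) i) = (c \<circ> h) i)
      \<longleftrightarrow> (\<forall>i\<in>S. young_count m (N \<omega>) (A \<omega>) (C i) = c i)" for \<omega>
    using e1[of "\<lambda>i. young_count m (N \<omega>) (A \<omega>) (C i) = c i"] by (simp add: o_def)
  have u: "UNIV \<in> sets (borel :: real measure)" by simp
  show ?thesis using H[OF u] by (simp only: e1' e2 indicator_UNIV mult_1 UNIV_I simp_thms)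
qed

lemma prod_poisson:
  fixes v :: "'i \<Rightarrow> real" and c :: "'i \<Rightarrow> nat"
  assumes "finite S"
  shows "(\<Prod>i\<in>S. poisson_prob (g * v i / T) (c i))
     = exp (- (g * (\<Sum>i\<in>S. v i) / T)) * g ^ (\<Sum>i\<in>S. c i) / T ^ (\<Sum>i\<in>S. c i) * (\<Prod>i\<in>S. v i ^ c i / fact (c i))"
  using assms
proof (induction S rule: finite_induct)
  case empty
  then show ?case by simp
next
  case (insert x F)
  have "exp (- (g * (v x + sum v F) / T)) = exp (- (g * v x / T)) * exp (- (g * sum v F / T))"
    by (simp add: exp_add[symmetric] algebra_simps add_divide_distrib)
  moreover have "(g * v x / T) ^ c x = g ^ c x * v x ^ c x / T ^ c x"
    by (simp add: power_mult_distrib power_divide)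
  ultimately show ?case using insert(1,2,3)
    by (simp add: poisson_prob_def power_add mult_ac)

qed

definition "Phi n = (\<integral>\<omega>. exp (- (Gam \<omega> * Z / T)) * Gam \<omega> ^ n \<partial>M) / T ^ n"

lemma count_prob:
  fixes C :: "'i \<Rightarrow> real set" and c :: "'i \<Rightarrow> nat"
  assumes S: "finite S" and disj: "disjoint_family_on C S" and Cb: "\<And>i. i \<in> S \<Longrightarrow> C i \<in> sets borel"
    and cov: "(\<Union>i\<in>S. C i) = UNIV" and cs: "(\<Sum>i\<in>S. c i) = n"
  shows "measure M {\<omega> \<in> space M. \<forall>i\<in>S. young_count m (N \<omega>) (A \<omega>) (C i) = c i}
     = Phi n * (\<Prod>i\<in>S. nu (C i) ^ c i / fact (c i))"
proof -
  have sv: "(\<Sum>i\<in>S. nu (C i)) = Z" using nu_add[OF S disj Cb] cov unfolding Z_def by simp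
  have "\<And>\<omega>. (\<Prod>i\<in>S. poisson_prob (cox_mean tau t (Gam \<omega>) (C i)) (c i))
     = exp (- (Gam \<omega> * Z / T)) * Gam \<omega> ^ n / T ^ n * (\<Prod>i\<in>S. nu (C i) ^ c i / fact (c i))"
    unfolding cox_mean_eq using prod_poisson[OF S, of "Gam _" "\<lambda>i. nu (C i)" c] sv cs by simp
  then have "measure M {\<omega> \<in> space M. \<forall>i\<in>S. young_count m (N \<omega>) (A \<omega>) (C i) = c i}
     = (\<integral>\<omega>. exp (- (Gam \<omega> * Z / T)) * Gam \<omega> ^ n / T ^ n * (\<Prod>i\<in>S. nu (C i) ^ c i / fact (c i)) \<partial>M)"
    using hyp_fin[OF S disj Cb, of c] by simp
  also have "\<dots> = Phi n * (\<Prod>i\<in>S. nu (C i) ^ c i / fact (c i))"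
    unfolding Phi_def by (simp add: integral_mult_left_zero integral_divide_zero)
  finally show ?thesis .
qed

lemma yc_UNIV: "young_count m j a UNIV = j"
proof -
  have "{i. m < i \<and> i \<le> m + j \<and> a i \<in> UNIV} = {m<..m+j}" by auto
  then show ?thesis unfolding young_count_def by simp
qed

lemma Pn_eq: "measure M {\<omega> \<in> space M. N \<omega> = n} = Phi n * Z ^ n / fact n"
  using count_prob[of "{0::nat}" "\<lambda>_. UNIV" "\<lambda>_. n" n] unfolding yc_UNIV Z_def
  by (simp add: disjoint_family_on_def)

lemma pow_fact_le_exp: "0 \<le> r \<Longrightarrow> r ^ n / fact n \<le> exp (r::real)"
proof -
  assume r: "0 \<le> r"
  have s: "summable (\<lambda>x::nat. r ^ x / fact x)" using summable_exp
    by (simp add: field_simps divide_inverse [symmetric])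
  have e: "exp r = (\<Sum>x. r ^ x / fact x)" unfolding exp_def
    by (simp add: field_simps divide_inverse [symmetric])
  have "(\<Sum>x\<in>{n}. r ^ x / fact x) \<le> (\<Sum>x. r ^ x / fact x)"
    by (rule sum_le_suminf[OF s]) (use r in auto)
  then show ?thesis using e by simp
qed

lemma Gam_pos: "AE \<omega> in M. Gam \<omega> > 0"
proof -
  have "emeasure M (Gam -` {..0} \<inter> space M)
      = (\<integral>\<^sup>+x. ennreal (gamma_dens (real m + \<delta>) x) * indicator {..0} x \<partial>lborel)"
    by (rule distributed_emeasure[OF Gam_distr]) simp
  also have "\<dots> = (\<integral>\<^sup>+x. 0 \<partial>(lborel :: real measure))"
    by (rule nn_integral_cong) (simp add: gamma_dens_def indicator_def)
  finally have z: "emeasure M (Gam -` {..0} \<inter> space M) = 0" by simp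
  show ?thesis
    by (rule AE_I[OF _ z]) auto
qed

lemma Pn_pos: "measure M {\<omega> \<in> space M. N \<omega> = n} > 0"
proof -
  define X where "X \<omega> = poisson_prob (Gam \<omega> * Z / T) n" for \<omega>
  have "measure M {\<omega> \<in> space M. N \<omega> = n}
     = (\<integral>\<omega>. poisson_prob (cox_mean (tau_par m \<delta>) t (Gam \<omega>) UNIV) n \<partial>M)"
    using hyp[of UNIV 1 "\<lambda>_. UNIV" "\<lambda>_. n"] by (simp add: disjoint_family_on_def yc_UNIV)
  then have eq: "measure M {\<omega> \<in> space M. N \<omega> = n} = integral\<^sup>L M X"
    unfolding X_def by (simp add: cox_mean_eq[unfolded tau_def] Z_def)
  have Xm: "X \<in> borel_measurable M" unfolding X_def poisson_prob_def by measurable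
  have Xpos: "AE \<omega> in M. 0 < X \<omega>"
    using Gam_pos by eventually_elim (use Z_pos T_pos in \<open>auto simp: X_def poisson_prob_def\<close>)
  have Xle: "AE \<omega> in M. norm (X \<omega>) \<le> 1"
    using Gam_pos
  proof eventually_elim
    case (elim \<omega>)
    define r where "r = Gam \<omega> * Z / T"
    have r: "0 \<le> r" using elim Z_pos T_pos unfolding r_def by simp
    have "exp (- r) * r ^ n / fact n \<le> exp (-r) * exp r"
      using pow_fact_le_exp[OF r, of n] by (simp add: mult_left_mono divide_inverse mult.assoc)
    also have "exp (-r) * exp r = 1" by (simp add: exp_minus_inverse mult_exp_exp)
    finally have le: "exp (- r) * r ^ n / fact n \<le> 1" .
    have nn: "0 \<le> exp (- r) * r ^ n / fact n" using r by simp
    have "X \<omega> = exp (- r) * r ^ n / fact n" unfolding X_def poisson_prob_def r_def ..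
    then show ?case using le nn by (simp only: real_norm_def abs_of_nonneg)
  qed
  have int: "integrable M X"
    by (rule integrable_const_bound[OF Xle Xm])
  have nn: "integral\<^sup>L M X \<ge> 0"
    by (rule integral_nonneg_AE) (use Xpos in \<open>eventually_elim, simp\<close>)
  have "integral\<^sup>L M X \<noteq> 0"
  proof
    assume "integral\<^sup>L M X = 0"
    then have "AE \<omega> in M. X \<omega> = 0"
      using integral_nonneg_eq_0_iff_AE[OF int] Xpos by (metis (mono_tags, lifting) AE_mp less_imp_le always_eventually)
    with Xpos have "AE \<omega> in M. False" by eventually_elim simp
    then show False by simp
  qed
  then show ?thesis using eq nn by simp
qed


end

lemma transfer_sum:
  fixes G q r :: "'a list \<Rightarrow> real"
  assumes fin: "finite Ls"
    and inv: "\<And>L L'. L \<in> Ls \<Longrightarrow> L' \<in> Ls \<Longrightarrow> mset L = mset L' \<Longrightarrow> G L = G L'"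
    and cl: "\<And>Ms. Ms \<in> mset ` Ls \<Longrightarrow> (\<Sum>L\<in>{L \<in> Ls. mset L = Ms}. q L) = (\<Sum>L\<in>{L \<in> Ls. mset L = Ms}. r L)"
  shows "(\<Sum>L\<in>Ls. G L * q L) = (\<Sum>L\<in>Ls. G L * r L)"
proof -
  have key: "(\<Sum>L\<in>{L \<in> Ls. mset L = Ms}. G L * f L) = G L0 * (\<Sum>L\<in>{L \<in> Ls. mset L = Ms}. f L)"
    if "L0 \<in> Ls" "mset L0 = Ms" for Ms L0 and f :: "'a list \<Rightarrow> real"
  proof -
    have "(\<Sum>L\<in>{L \<in> Ls. mset L = Ms}. G L * f L) = (\<Sum>L\<in>{L \<in> Ls. mset L = Ms}. G L0 * f L)"
    proof (rule sum.cong[OF refl])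
      fix L assume "L \<in> {L \<in> Ls. mset L = Ms}"
      then have "G L = G L0" using inv[of L L0] that by simp
      then show "G L * f L = G L0 * f L" by simp
    qed
    then show ?thesis by (simp add: sum_distrib_left)
  qed
  have "(\<Sum>L\<in>Ls. G L * q L) = (\<Sum>Ms\<in>mset ` Ls. \<Sum>L\<in>{L \<in> Ls. mset L = Ms}. G L * q L)"
    by (rule sum.image_gen[OF fin])
  also have "\<dots> = (\<Sum>Ms\<in>mset ` Ls. \<Sum>L\<in>{L \<in> Ls. mset L = Ms}. G L * r L)"
  proof (rule sum.cong[OF refl])
    fix Ms assume Ms: "Ms \<in> mset ` Ls"
    then obtain L0 where L0: "L0 \<in> Ls" "mset L0 = Ms" by blast
    show "(\<Sum>L\<in>{L \<in> Ls. mset L = Ms}. G L * q L) = (\<Sum>L\<in>{L \<in> Ls. mset L = Ms}. G L * r L)"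
      using key[OF L0, of q] key[OF L0, of r] cl[OF Ms] by simp
  qed
  also have "\<dots> = (\<Sum>L\<in>Ls. G L * r L)"
    by (rule sum.image_gen[OF fin, symmetric])
  finally show ?thesis .
qed

lemma prod_if_zero:
  fixes f :: "'i \<Rightarrow> real"
  assumes "finite S"
  shows "(\<Prod>i\<in>S. if P i then f i else 0) = (if \<forall>i\<in>S. P i then \<Prod>i\<in>S. f i else 0)"
  using assms by (induction S rule: finite_induct) simp_all

locale ppt2 = ppt +
  fixes k :: nat and B :: "nat \<Rightarrow> real set"
  assumes k: "k > m" and Bb[measurable]: "\<And>j. B j \<in> sets borel"
begin

definition "nk = k - m"
definition "J = {m+1..k}"
definition "atm x = {j \<in> J. x \<in> B j}"
definition "Cat I = {x. atm x = I}"
definition "Lw \<omega> = map (\<lambda>i. atm (A \<omega> (m+1+i))) [0..<nk]"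
definition "Ls = {xs. set xs \<subseteq> Pow J \<and> length xs = nk}"
definition "evL xs = {\<omega> \<in> space M. N \<omega> = nk \<and> (\<forall>i<nk. A \<omega> (m+1+i) \<in> Cat (xs!i))}"
definition "p I = nu (Cat I) / Z"
definition "Pn = measure M {\<omega> \<in> space M. N \<omega> = nk}"

lemma finJ: "finite J" unfolding J_def by simp
lemma cardJ: "card J = nk" unfolding J_def nk_def using k by simp
lemma at_sub: "atm x \<subseteq> J" unfolding atm_def by auto
lemma m1i_J: "i < nk \<Longrightarrow> m + 1 + i \<in> J" unfolding J_def nk_def by auto

lemma Cat_eq: "Cat I = (if I \<subseteq> J then (\<Inter>j\<in>J. if j \<in> I then B j else UNIV - B j) else {})"
proof (cases "I \<subseteq> J")
  case True
  have "x \<in> Cat I \<longleftrightarrow> (\<forall>j\<in>J. x \<in> (if j \<in> I then B j else UNIV - B j))" for x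
  proof -
    have "x \<in> Cat I \<longleftrightarrow> (\<forall>j\<in>J. x \<in> B j \<longleftrightarrow> j \<in> I)" using True unfolding Cat_def atm_def by blast
    also have "\<dots> \<longleftrightarrow> (\<forall>j\<in>J. x \<in> (if j \<in> I then B j else UNIV - B j))" by auto
    finally show ?thesis .
  qed
  then have "Cat I = (\<Inter>j\<in>J. if j \<in> I then B j else UNIV - B j)" by blast
  then show ?thesis using True by simp
next
  case False
  then show ?thesis using at_sub unfolding Cat_def by auto
qed

lemma Cat_borel[measurable]: "Cat I \<in> sets borel"
proof -
  have "J \<noteq> {}" unfolding J_def using k by auto
  then have "(\<Inter>j\<in>J. if j \<in> I then B j else UNIV - B j) \<in> sets borel"
    using finJ by (intro sets.finite_INT) auto
  then show ?thesis unfolding Cat_eq by simp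
qed

lemma Cat_disj: "disjoint_family_on Cat S"
  unfolding disjoint_family_on_def Cat_def by auto

lemma Cat_cover: "(\<Union>I\<in>Pow J. Cat I) = UNIV"
  unfolding Cat_def using at_sub by auto

lemma B_union: "j \<in> J \<Longrightarrow> (\<Union>I\<in>{I \<in> Pow J. j \<in> I}. Cat I) = B j"
  unfolding Cat_def atm_def by auto

lemma p_sum: "j \<in> J \<Longrightarrow> (\<Sum>I\<in>{I \<in> Pow J. j \<in> I}. p I) = nu (B j) / Z"
proof -
  assume j: "j \<in> J"
  have "nu (B j) = (\<Sum>I\<in>{I \<in> Pow J. j \<in> I}. nu (Cat I))"
    using nu_add[of "{I \<in> Pow J. j \<in> I}" Cat] B_union[OF j] finJ Cat_disj by simp
  then show ?thesis unfolding p_def by (simp add: sum_divide_distrib)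
qed

lemma finLs: "finite Ls"
  unfolding Ls_def using finite_lists_length_eq[of "Pow J" nk] finJ by simp

lemma Lw_Ls: "Lw \<omega> \<in> Ls"
  unfolding Lw_def Ls_def using at_sub by auto

lemma Lw_nth: "i < nk \<Longrightarrow> Lw \<omega> ! i = atm (A \<omega> (m+1+i))"
  unfolding Lw_def by simp

lemma evL_meas: "evL xs \<in> sets M"
  unfolding evL_def by measurable

lemma evL_iff: "\<omega> \<in> space M \<Longrightarrow> xs \<in> Ls \<Longrightarrow> \<omega> \<in> evL xs \<longleftrightarrow> N \<omega> = nk \<and> Lw \<omega> = xs"
proof -
  assume om: "\<omega> \<in> space M" and xs: "xs \<in> Ls"
  have "(\<forall>i<nk. A \<omega> (m+1+i) \<in> Cat (xs!i)) \<longleftrightarrow> (\<forall>i<nk. Lw \<omega> ! i = xs ! i)"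
    by (simp add: Lw_nth Cat_def)
  also have "\<dots> \<longleftrightarrow> Lw \<omega> = xs"
    using xs Lw_Ls[of \<omega>] unfolding Ls_def by (auto simp: list_eq_iff_nth_eq)
  finally show ?thesis unfolding evL_def using om by auto
qed

lemma meas_sum:
  "measure M {\<omega> \<in> space M. N \<omega> = nk \<and> \<Phi> (Lw \<omega>)} = (\<Sum>xs\<in>{xs \<in> Ls. \<Phi> xs}. measure M (evL xs))"
proof -
  have eq: "{\<omega> \<in> space M. N \<omega> = nk \<and> \<Phi> (Lw \<omega>)} = (\<Union>xs\<in>{xs \<in> Ls. \<Phi> xs}. evL xs)"
  proof (intro equalityI subsetI)
    fix \<omega> assume "\<omega> \<in> {\<omega> \<in> space M. N \<omega> = nk \<and> \<Phi> (Lw \<omega>)}"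
    then show "\<omega> \<in> (\<Union>xs\<in>{xs \<in> Ls. \<Phi> xs}. evL xs)"
      using evL_iff[of \<omega> "Lw \<omega>"] Lw_Ls[of \<omega>] by auto
  next
    fix \<omega> assume "\<omega> \<in> (\<Union>xs\<in>{xs \<in> Ls. \<Phi> xs}. evL xs)"
    then obtain xs where xs: "xs \<in> Ls" "\<Phi> xs" "\<omega> \<in> evL xs" by auto
    then have "\<omega> \<in> space M" unfolding evL_def by auto
    then show "\<omega> \<in> {\<omega> \<in> space M. N \<omega> = nk \<and> \<Phi> (Lw \<omega>)}"
      using evL_iff[of \<omega> xs] xs by auto
  qed
  have disj: "disjoint_family_on evL {xs \<in> Ls. \<Phi> xs}"
    unfolding disjoint_family_on_def
  proof (intro ballI impI)
    fix xs xs' assume xs: "xs \<in> {xs \<in> Ls. \<Phi> xs}" "xs' \<in> {xs \<in> Ls. \<Phi> xs}" "xs \<noteq> xs'"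
    show "evL xs \<inter> evL xs' = {}"
    proof (rule ccontr)
      assume "evL xs \<inter> evL xs' \<noteq> {}"
      then obtain \<omega> where "\<omega> \<in> evL xs" "\<omega> \<in> evL xs'" by auto
      moreover have "\<omega> \<in> space M" using \<open>\<omega> \<in> evL xs\<close> unfolding evL_def by auto
      ultimately show False using evL_iff[of \<omega> xs] evL_iff[of \<omega> xs'] xs by auto
    qed
  qed
  show ?thesis unfolding eq
    by (rule measure_finite_Union) (use finLs disj evL_meas in \<open>auto simp: emeasure_finite\<close>)
qed

lemma yc_eq: "N \<omega> = nk \<Longrightarrow> young_count m (N \<omega>) (A \<omega>) (Cat I) = count (mset (Lw \<omega>)) I"
proof -
  assume Nw: "N \<omega> = nk"
  have len: "length (Lw \<omega>) = nk" unfolding Lw_def by simp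
  have c1: "count (mset (Lw \<omega>)) I = card {i. i < length (Lw \<omega>) \<and> I = Lw \<omega> ! i}"
    unfolding count_mset count_list_eq_length_filter length_filter_conv_card by simp
  have c2: "{i. i < length (Lw \<omega>) \<and> I = Lw \<omega> ! i} = {i. i < nk \<and> I = atm (A \<omega> (m+1+i))}"
    using len Lw_nth by auto
  have c3: "card {i. i < nk \<and> I = atm (A \<omega> (m+1+i))} = card ((\<lambda>i. m+1+i) ` {i. i < nk \<and> I = atm (A \<omega> (m+1+i))})"
    by (rule card_image[symmetric]) (auto simp: inj_on_def)
  have c4: "(\<lambda>i. m+1+i) ` {i. i < nk \<and> I = atm (A \<omega> (m+1+i))} = {j. m < j \<and> j \<le> m + N \<omega> \<and> A \<omega> j \<in> Cat I}"
  proof (intro equalityI subsetI)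
    fix j assume "j \<in> {j. m < j \<and> j \<le> m + N \<omega> \<and> A \<omega> j \<in> Cat I}"
    then have "j = m + 1 + (j - m - 1)" "j - m - 1 < nk" "I = atm (A \<omega> (m + 1 + (j - m - 1)))"
      using Nw unfolding Cat_def by auto
    then show "j \<in> (\<lambda>i. m+1+i) ` {i. i < nk \<and> I = atm (A \<omega> (m+1+i))}" by blast
  qed (use Nw in \<open>auto simp: Cat_def\<close>)
  show ?thesis unfolding young_count_def c1 c2 c3 c4 ..
qed

lemma sum_yc: "(\<Sum>I\<in>Pow J. young_count m Nw a (Cat I)) = Nw"
proof -
  have "{j. m < j \<and> j \<le> m + Nw} = (\<Union>I\<in>Pow J. {j. m < j \<and> j \<le> m + Nw \<and> a j \<in> Cat I})"
    using Cat_cover by blast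
  moreover have "card {j. m < j \<and> j \<le> m + Nw} = Nw"
  proof -
    have "{j. m < j \<and> j \<le> m + Nw} = {m<..m+Nw}" by auto
    then show ?thesis by simp
  qed
  ultimately have "Nw = card (\<Union>I\<in>Pow J. {j. m < j \<and> j \<le> m + Nw \<and> a j \<in> Cat I})"
    by simp
  also have "\<dots> = (\<Sum>I\<in>Pow J. card {j. m < j \<and> j \<le> m + Nw \<and> a j \<in> Cat I})"
    by (rule card_UN_disjoint) (use finJ in \<open>auto simp: Cat_def\<close>)
  finally show ?thesis unfolding young_count_def by simp
qed

lemma sum_count: "set_mset Ms \<subseteq> Pow J \<Longrightarrow> (\<Sum>I\<in>Pow J. count Ms I) = size Ms"
proof -
  assume s: "set_mset Ms \<subseteq> Pow J"
  have "size Ms = (\<Sum>I\<in>set_mset Ms. count Ms I)" by (rule size_multiset_overloaded_eq)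
  also have "\<dots> = (\<Sum>I\<in>Pow J. count Ms I)"
    by (rule sum.mono_neutral_left) (use s finJ in \<open>auto simp: not_in_iff\<close>)
  finally show ?thesis by simp
qed

lemma class_event:
  assumes s: "set_mset Ms \<subseteq> Pow J" and sz: "size Ms = nk"
  shows "{\<omega> \<in> space M. N \<omega> = nk \<and> mset (Lw \<omega>) = Ms}
       = {\<omega> \<in> space M. \<forall>I\<in>Pow J. young_count m (N \<omega>) (A \<omega>) (Cat I) = count Ms I}"
proof (intro equalityI subsetI)
  fix \<omega> assume "\<omega> \<in> {\<omega> \<in> space M. N \<omega> = nk \<and> mset (Lw \<omega>) = Ms}"
  then show "\<omega> \<in> {\<omega> \<in> space M. \<forall>I\<in>Pow J. young_count m (N \<omega>) (A \<omega>) (Cat I) = count Ms I}"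
    using yc_eq by auto
next
  fix \<omega> assume a: "\<omega> \<in> {\<omega> \<in> space M. \<forall>I\<in>Pow J. young_count m (N \<omega>) (A \<omega>) (Cat I) = count Ms I}"
  have "N \<omega> = (\<Sum>I\<in>Pow J. young_count m (N \<omega>) (A \<omega>) (Cat I))" by (rule sum_yc[symmetric])
  also have "\<dots> = (\<Sum>I\<in>Pow J. count Ms I)" using a by simp
  also have "\<dots> = nk" using sum_count[OF s] sz by simp
  finally have Nw: "N \<omega> = nk" .
  have "mset (Lw \<omega>) = Ms"
  proof (rule multiset_eqI)
    fix I
    show "count (mset (Lw \<omega>)) I = count Ms I"
    proof (cases "I \<in> Pow J")
      case True
      then show ?thesis using a yc_eq[OF Nw, of I] by auto
    next
      case False
      then have "I \<notin> set (Lw \<omega>)" "I \<notin># Ms" using Lw_Ls[of \<omega>] s unfolding Ls_def by auto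
      then show ?thesis by (simp add: not_in_iff)
    qed
  qed
  then show "\<omega> \<in> {\<omega> \<in> space M. N \<omega> = nk \<and> mset (Lw \<omega>) = Ms}" using a Nw by auto
qed

lemma Pn_phi: "Phi nk = Pn * fact nk / Z ^ nk"
  using Pn_eq[of nk] Z_pos unfolding Pn_def by (simp add: field_simps)

lemma class_prob:
  assumes s: "set_mset Ms \<subseteq> Pow J" and sz: "size Ms = nk"
  shows "measure M {\<omega> \<in> space M. N \<omega> = nk \<and> mset (Lw \<omega>) = Ms}
       = Pn * fact nk * (\<Prod>I\<in>Pow J. p I ^ count Ms I / fact (count Ms I))"
proof -
  have "measure M {\<omega> \<in> space M. N \<omega> = nk \<and> mset (Lw \<omega>) = Ms}
      = Phi nk * (\<Prod>I\<in>Pow J. nu (Cat I) ^ count Ms I / fact (count Ms I))"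
    unfolding class_event[OF s sz]
    by (rule count_prob) (use finJ Cat_disj Cat_cover sum_count[OF s] sz in auto)
  also have "(\<Prod>I\<in>Pow J. nu (Cat I) ^ count Ms I / fact (count Ms I))
      = Z ^ nk * (\<Prod>I\<in>Pow J. p I ^ count Ms I / fact (count Ms I))"
  proof -
    have "(\<Prod>I\<in>Pow J. nu (Cat I) ^ count Ms I / fact (count Ms I))
        = (\<Prod>I\<in>Pow J. Z ^ count Ms I * (p I ^ count Ms I / fact (count Ms I)))"
      by (rule prod.cong[OF refl]) (use Z_pos in \<open>simp add: p_def power_divide\<close>)
    also have "\<dots> = Z ^ (\<Sum>I\<in>Pow J. count Ms I) * (\<Prod>I\<in>Pow J. p I ^ count Ms I / fact (count Ms I))"
      by (simp only: prod.distrib power_sum)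
    finally show ?thesis using sum_count[OF s] sz by simp
  qed
  finally show ?thesis unfolding Pn_phi using Z_pos by simp
qed

lemma class_r:
  assumes s: "set_mset Ms \<subseteq> Pow J" and sz: "size Ms = nk"
  shows "(\<Sum>xs\<in>{xs \<in> Ls. mset xs = Ms}. Pn * prod_list (map p xs))
       = Pn * fact nk * (\<Prod>I\<in>Pow J. p I ^ count Ms I / fact (count Ms I))"
proof -
  have cls: "{xs \<in> Ls. mset xs = Ms} = permutations_of_multiset Ms"
  proof (intro equalityI subsetI)
    fix xs assume "xs \<in> {xs \<in> Ls. mset xs = Ms}"
    then show "xs \<in> permutations_of_multiset Ms" by (auto intro: permutations_of_multisetI)
  next
    fix xs assume "xs \<in> permutations_of_multiset Ms"
    then have "mset xs = Ms" by (rule permutations_of_multisetD)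
    then have "set xs = set_mset Ms" "length xs = size Ms" by (auto simp flip: set_mset_mset size_mset)
    then show "xs \<in> {xs \<in> Ls. mset xs = Ms}" using s sz \<open>mset xs = Ms\<close> unfolding Ls_def by auto
  qed
  define PP where "PP = (\<Prod>I\<in>set_mset Ms. p I ^ count Ms I)"
  define FF where "FF = (\<Prod>I\<in>set_mset Ms. fact (count Ms I) :: nat)"
  have pl: "prod_list (map p xs) = PP" if "xs \<in> permutations_of_multiset Ms" for xs
  proof -
    have "mset xs = Ms" using that by (rule permutations_of_multisetD)
    have "prod_list (map p xs) = prod_mset (mset (map p xs))" by (rule prod_mset_prod_list[symmetric])
    also have "\<dots> = prod_mset (image_mset p Ms)" using \<open>mset xs = Ms\<close> by simp
    also have "\<dots> = PP" unfolding PP_def by (rule image_prod_mset_multiplicity)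
    finally show ?thesis .
  qed
  have e1: "(\<Sum>xs\<in>{xs \<in> Ls. mset xs = Ms}. Pn * prod_list (map p xs)) = real (card (permutations_of_multiset Ms)) * (Pn * PP)"
    unfolding cls using pl by simp
  have e2: "real (card (permutations_of_multiset Ms)) * real FF = fact nk"
    using card_permutations_of_multiset_aux[of Ms] sz unfolding FF_def
    by (metis of_nat_fact of_nat_mult)
  have e3: "(\<Prod>I\<in>Pow J. p I ^ count Ms I / fact (count Ms I)) = PP / real FF"
  proof -
    have "(\<Prod>I\<in>Pow J. p I ^ count Ms I / fact (count Ms I)) = (\<Prod>I\<in>set_mset Ms. p I ^ count Ms I / fact (count Ms I))"
      by (rule prod.mono_neutral_right) (use s finJ in \<open>auto simp: not_in_iff\<close>)
    also have "\<dots> = PP / real FF" unfolding PP_def FF_def by (simp add: prod_dividef)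
    finally show ?thesis .
  qed
  have e4: "real FF > 0" unfolding FF_def by (simp add: prod_pos)
  have "Pn * fact nk * (PP / real FF) = Pn * (real (card (permutations_of_multiset Ms)) * real FF) * (PP / real FF)"
    by (simp only: e2)
  also have "\<dots> = real (card (permutations_of_multiset Ms)) * (Pn * PP)"
    using e4 by (simp add: field_simps)
  finally show ?thesis unfolding e1 e3 by simp
qed


definition "ok \<sigma> xs = (\<forall>i<nk. m+1+i \<in> xs ! (\<sigma> i))"
definition "Gf xs = (\<Sum>\<sigma>\<in>{\<sigma>. \<sigma> permutes {..<nk}}. if ok \<sigma> xs then 1 else 0 :: real)"

lemma finPerms: "finite {\<sigma>. \<sigma> permutes {..<nk}}"
  by (rule finite_permutations) simp

lemma Gf_inv:
  assumes xs: "xs \<in> Ls" and ys: "ys \<in> Ls" and eq: "mset xs = mset ys"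
  shows "Gf xs = Gf ys"
proof -
  obtain \<rho> where \<rho>: "\<rho> permutes {..<length ys}" "permute_list \<rho> ys = xs"
    using mset_eq_permutation[OF eq] by blast
  have ly: "length ys = nk" using ys unfolding Ls_def by simp
  have \<rho>': "\<rho> permutes {..<nk}" using \<rho>(1) ly by simp
  have okeq: "ok \<sigma> xs = ok (\<rho> \<circ> \<sigma>) ys" if \<sigma>: "\<sigma> permutes {..<nk}" for \<sigma>
  proof -
    have "xs ! (\<sigma> i) = ys ! (\<rho> (\<sigma> i))" if i: "i < nk" for i
    proof -
      have "\<sigma> i < nk" using permutes_in_image[OF \<sigma>, of i] i by simp
      then show ?thesis using permute_list_nth[OF \<rho>(1), of "\<sigma> i"] \<rho>(2) ly by simp
    qed
    then show ?thesis unfolding ok_def by simp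
  qed
  have "Gf ys = (\<Sum>\<sigma>\<in>{\<sigma>. \<sigma> permutes {..<nk}}. if ok (\<rho> \<circ> \<sigma>) ys then 1 else 0 :: real)"
    unfolding Gf_def by (rule setum_permutations_compose_left[OF \<rho>'])
  also have "\<dots> = Gf xs"
    unfolding Gf_def by (rule sum.cong[OF refl]) (simp add: okeq)
  finally show ?thesis by simp
qed

lemma sumG: "(\<Sum>xs\<in>Ls. Gf xs * f xs) = (\<Sum>\<sigma>\<in>{\<sigma>. \<sigma> permutes {..<nk}}. \<Sum>xs\<in>Ls. if ok \<sigma> xs then f xs else 0)"
proof -
  have "(\<Sum>xs\<in>Ls. Gf xs * f xs) = (\<Sum>xs\<in>Ls. \<Sum>\<sigma>\<in>{\<sigma>. \<sigma> permutes {..<nk}}. if ok \<sigma> xs then f xs else 0)"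
    unfolding Gf_def sum_distrib_right by (rule sum.cong[OF refl], rule sum.cong[OF refl]) simp
  also have "\<dots> = (\<Sum>\<sigma>\<in>{\<sigma>. \<sigma> permutes {..<nk}}. \<Sum>xs\<in>Ls. if ok \<sigma> xs then f xs else 0)"
    by (rule sum.swap)
  finally show ?thesis .
qed

lemma Q_eq:
  assumes \<sigma>: "\<sigma> permutes {..<nk}"
  shows "measure M {\<omega> \<in> space M. N \<omega> = nk \<and> (\<forall>i<nk. A \<omega> (m+1+\<sigma> i) \<in> B (m+1+i))}
       = (\<Sum>xs\<in>Ls. if ok \<sigma> xs then measure M (evL xs) else 0)"
proof -
  have "ok \<sigma> (Lw \<omega>) \<longleftrightarrow> (\<forall>i<nk. A \<omega> (m+1+\<sigma> i) \<in> B (m+1+i))" for \<omega>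
  proof -
    have "m + 1 + i \<in> Lw \<omega> ! (\<sigma> i) \<longleftrightarrow> A \<omega> (m+1+\<sigma> i) \<in> B (m+1+i)" if i: "i < nk" for i
    proof -
      have "\<sigma> i < nk" using permutes_in_image[OF \<sigma>, of i] i by simp
      then show ?thesis using m1i_J[OF i] by (simp add: Lw_nth atm_def)
    qed
    then show ?thesis unfolding ok_def by simp
  qed
  then have "{\<omega> \<in> space M. N \<omega> = nk \<and> (\<forall>i<nk. A \<omega> (m+1+\<sigma> i) \<in> B (m+1+i))}
      = {\<omega> \<in> space M. N \<omega> = nk \<and> ok \<sigma> (Lw \<omega>)}" by simp
  then show ?thesis using meas_sum[of "ok \<sigma>"] sum.inter_filter[OF finLs] by simp
qed

lemma cls_eq:
  assumes Ms: "Ms \<in> mset ` Ls"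
  shows "(\<Sum>xs\<in>{xs \<in> Ls. mset xs = Ms}. measure M (evL xs))
       = (\<Sum>xs\<in>{xs \<in> Ls. mset xs = Ms}. Pn * prod_list (map p xs))"
proof -
  obtain xs0 where xs0: "xs0 \<in> Ls" "Ms = mset xs0" using Ms by blast
  have s: "set_mset Ms \<subseteq> Pow J" and sz: "size Ms = nk" using xs0 unfolding Ls_def by auto
  have "(\<Sum>xs\<in>{xs \<in> Ls. mset xs = Ms}. measure M (evL xs))
      = measure M {\<omega> \<in> space M. N \<omega> = nk \<and> mset (Lw \<omega>) = Ms}"
    using meas_sum[of "\<lambda>xs. mset xs = Ms"] by simp
  also have "\<dots> = (\<Sum>xs\<in>{xs \<in> Ls. mset xs = Ms}. Pn * prod_list (map p xs))"
    unfolding class_prob[OF s sz] class_r[OF s sz] ..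
  finally show ?thesis .
qed

lemma list_PiE_sum:
  "(\<Sum>xs\<in>Ls. F xs) = (\<Sum>e\<in>PiE {..<nk} (\<lambda>_. Pow J). F (map e [0..<nk]))"
proof (rule sum.reindex_bij_witness[symmetric, where j = "\<lambda>e. map e [0..<nk]"
      and i = "\<lambda>xs. (\<lambda>i. if i < nk then xs ! i else undefined)"])
  fix e assume e: "e \<in> PiE {..<nk} (\<lambda>_. Pow J)"
  show "(\<lambda>i. if i < nk then map e [0..<nk] ! i else undefined) = e"
  proof (rule ext)
    fix i show "(if i < nk then map e [0..<nk] ! i else undefined) = e i"
      using e by (cases "i < nk") (auto simp: PiE_def extensional_def)
  qed
  show "map e [0..<nk] \<in> Ls" using e unfolding Ls_def by auto
next
  fix xs assume xs: "xs \<in> Ls"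
  show "map (\<lambda>i. if i < nk then xs ! i else undefined) [0..<nk] = xs"
    using xs unfolding Ls_def by (auto simp: list_eq_iff_nth_eq)
  show "(\<lambda>i. if i < nk then xs ! i else undefined) \<in> PiE {..<nk} (\<lambda>_. Pow J)"
  proof -
    have "xs ! i \<in> Pow J" if "i < nk" for i
      using xs that unfolding Ls_def by (metis (mono_tags, lifting) mem_Collect_eq nth_mem subsetD)
    then show ?thesis by (auto simp: PiE_def extensional_def)
  qed
qed simp

lemma per_sigma:
  assumes \<sigma>: "\<sigma> permutes {..<nk}"
  shows "(\<Sum>xs\<in>Ls. if ok \<sigma> xs then Pn * prod_list (map p xs) else 0)
       = Pn * (\<Prod>i<nk. nu (B (m+1+i)) / Z)"
proof -
  define h where "h i I = (if m+1+i \<in> I then p I else 0)" for i I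
  have bij: "bij_betw \<sigma> {..<nk} {..<nk}" by (rule permutes_imp_bij[OF \<sigma>])
  have inner: "(if ok \<sigma> (map e [0..<nk]) then Pn * prod_list (map p (map e [0..<nk])) else 0)
      = Pn * (\<Prod>i<nk. h (inv \<sigma> i) (e i))" if e: "e \<in> PiE {..<nk} (\<lambda>_. Pow J)" for e
  proof -
    have sl: "\<sigma> i < nk" if "i < nk" for i using permutes_in_image[OF \<sigma>, of i] that by simp
    have pl: "prod_list (map p (map e [0..<nk])) = (\<Prod>i<nk. p (e i))"
      by (simp add: prod.distinct_set_conv_list[symmetric] atLeast0LessThan)
    have okm: "ok \<sigma> (map e [0..<nk]) \<longleftrightarrow> (\<forall>i\<in>{..<nk}. m+1+i \<in> e (\<sigma> i))"
      unfolding ok_def using sl by auto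
    have "(\<Prod>i<nk. p (e i)) = (\<Prod>i<nk. p (e (\<sigma> i)))"
      using prod.reindex_bij_betw[OF bij, of "\<lambda>i. p (e i)"] by simp
    then have "(if ok \<sigma> (map e [0..<nk]) then Pn * prod_list (map p (map e [0..<nk])) else 0)
        = Pn * (if \<forall>i\<in>{..<nk}. m+1+i \<in> e (\<sigma> i) then \<Prod>i<nk. p (e (\<sigma> i)) else 0)"
      unfolding okm pl by simp
    also have "(if \<forall>i\<in>{..<nk}. m+1+i \<in> e (\<sigma> i) then \<Prod>i<nk. p (e (\<sigma> i)) else 0)
        = (\<Prod>i<nk. h i (e (\<sigma> i)))"
      unfolding h_def by (rule prod_if_zero[symmetric]) simp
    also have "\<dots> = (\<Prod>i<nk. h (inv \<sigma> i) (e i))"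
      using prod.permutes_inv[OF \<sigma>, of "\<lambda>a s. h s (e a)"] by simp
    finally show ?thesis .
  qed
  have sums: "(\<Sum>I\<in>Pow J. h i I) = nu (B (m+1+i)) / Z" if i: "i < nk" for i
  proof -
    have "(\<Sum>I\<in>Pow J. h i I) = (\<Sum>I\<in>{I \<in> Pow J. m+1+i \<in> I}. p I)"
      unfolding h_def by (rule sum.inter_filter[symmetric]) (simp add: finJ)
    then show ?thesis using p_sum[OF m1i_J[OF i]] by simp
  qed
  have "(\<Sum>xs\<in>Ls. if ok \<sigma> xs then Pn * prod_list (map p xs) else 0)
      = (\<Sum>e\<in>PiE {..<nk} (\<lambda>_. Pow J). Pn * (\<Prod>i<nk. h (inv \<sigma> i) (e i)))"
    unfolding list_PiE_sum by (rule sum.cong[OF refl]) (rule inner)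
  also have "\<dots> = Pn * (\<Prod>i<nk. \<Sum>I\<in>Pow J. h (inv \<sigma> i) I)"
    by (subst prod_sum_PiE) (simp_all add: finJ sum_distrib_left)
  also have "(\<Prod>i<nk. \<Sum>I\<in>Pow J. h (inv \<sigma> i) I) = (\<Prod>i<nk. \<Sum>I\<in>Pow J. h i I)"
    using prod.reindex_bij_betw[OF permutes_imp_bij[OF permutes_inv[OF \<sigma>]], of "\<lambda>i. \<Sum>I\<in>Pow J. h i I"] by simp
  also have "\<dots> = (\<Prod>i<nk. nu (B (m+1+i)) / Z)"
    by (rule prod.cong[OF refl]) (simp add: sums)
  finally show ?thesis .
qed

lemma main_sum:
  "(\<Sum>\<sigma>\<in>{\<sigma>. \<sigma> permutes {..<nk}}. measure M {\<omega> \<in> space M. N \<omega> = nk \<and> (\<forall>i<nk. A \<omega> (m+1+\<sigma> i) \<in> B (m+1+i))})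
   = fact nk * (Pn * (\<Prod>i<nk. nu (B (m+1+i)) / Z))"
proof -
  have "(\<Sum>\<sigma>\<in>{\<sigma>. \<sigma> permutes {..<nk}}. measure M {\<omega> \<in> space M. N \<omega> = nk \<and> (\<forall>i<nk. A \<omega> (m+1+\<sigma> i) \<in> B (m+1+i))})
      = (\<Sum>\<sigma>\<in>{\<sigma>. \<sigma> permutes {..<nk}}. \<Sum>xs\<in>Ls. if ok \<sigma> xs then measure M (evL xs) else 0)"
    by (rule sum.cong[OF refl], rule Q_eq, simp)
  also have "\<dots> = (\<Sum>xs\<in>Ls. Gf xs * measure M (evL xs))"
    by (rule sumG[symmetric])
  also have "\<dots> = (\<Sum>xs\<in>Ls. Gf xs * (Pn * prod_list (map p xs)))"
    by (rule transfer_sum[OF finLs]) (auto intro: Gf_inv cls_eq)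
  also have "\<dots> = (\<Sum>\<sigma>\<in>{\<sigma>. \<sigma> permutes {..<nk}}. \<Sum>xs\<in>Ls. if ok \<sigma> xs then Pn * prod_list (map p xs) else 0)"
    by (rule sumG)
  also have "\<dots> = (\<Sum>\<sigma>\<in>{\<sigma>. \<sigma> permutes {..<nk}}. Pn * (\<Prod>i<nk. nu (B (m+1+i)) / Z))"
    by (rule sum.cong[OF refl]) (simp add: per_sigma)
  also have "\<dots> = fact nk * (Pn * (\<Prod>i<nk. nu (B (m+1+i)) / Z))"
    using card_permutations[of "{..<nk}" nk] by simp
  finally show ?thesis .
qed


lemma num_eq:
  fixes \<pi> :: "_ \<Rightarrow> nat \<Rightarrow> nat"
  assumes \<pi>_meas: "\<pi> \<in> measurable M (count_space UNIV)"
    and \<pi>_perm: "\<forall>\<omega>\<in>space M. \<pi> \<omega> permutes {m+1..k}"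
    and \<pi>_unif: "\<forall>\<sigma>. \<sigma> permutes {m+1..k} \<longrightarrow>
                    measure M {\<omega> \<in> space M. \<pi> \<omega> = \<sigma>} = 1 / fact (k - m)"
    and \<pi>_indep: "\<forall>\<sigma> E. E \<in> sets (borel \<Otimes>\<^sub>M count_space UNIV \<Otimes>\<^sub>M Pi\<^sub>M UNIV (\<lambda>_. borel)) \<longrightarrow>
                    measure M {\<omega> \<in> space M. \<pi> \<omega> = \<sigma> \<and> (Gam \<omega>, N \<omega>, A \<omega>) \<in> E}
                    = measure M {\<omega> \<in> space M. \<pi> \<omega> = \<sigma>}
                      * measure M {\<omega> \<in> space M. (Gam \<omega>, N \<omega>, A \<omega>) \<in> E}"
  shows "measure M {\<omega> \<in> space M. m + N \<omega> = k \<and> (\<forall>j\<in>{m+1..k}. A \<omega> (\<pi> \<omega> j) \<in> B j)}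
       = Pn * (\<Prod>j\<in>{m+1..k}. nu (B j) / Z)"
proof -
  define PJ where "PJ = {\<sigma>. \<sigma> permutes J}"
  define F where "F \<sigma> = {\<omega> \<in> space M. \<pi> \<omega> = \<sigma> \<and> m + N \<omega> = k \<and> (\<forall>j\<in>J. A \<omega> (\<sigma> j) \<in> B j)}" for \<sigma>
  define Ev where "Ev \<sigma> = {\<omega> \<in> space M. m + N \<omega> = k \<and> (\<forall>j\<in>J. A \<omega> (\<sigma> j) \<in> B j)}" for \<sigma>
  define ES where "ES \<sigma> = {x :: real \<times> nat \<times> (nat \<Rightarrow> real). m + fst (snd x) = k \<and> (\<forall>j\<in>J. snd (snd x) (\<sigma> j) \<in> B j)}" for \<sigma>
  have finPJ: "finite PJ" unfolding PJ_def using finJ by (rule finite_permutations)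
  have ES_sets: "ES \<sigma> \<in> sets (borel \<Otimes>\<^sub>M count_space UNIV \<Otimes>\<^sub>M Pi\<^sub>M UNIV (\<lambda>_. borel))" for \<sigma>
  proof -
    have "ES \<sigma> = {x \<in> space (borel \<Otimes>\<^sub>M count_space UNIV \<Otimes>\<^sub>M Pi\<^sub>M UNIV (\<lambda>_. borel)).
        m + fst (snd x) = k \<and> (\<forall>j\<in>J. snd (snd x) (\<sigma> j) \<in> B j)}"
      unfolding ES_def by (simp add: space_pair_measure space_PiM)
    also have "\<dots> \<in> sets (borel \<Otimes>\<^sub>M count_space UNIV \<Otimes>\<^sub>M Pi\<^sub>M UNIV (\<lambda>_. borel))"
      using finJ by measurable
    finally show ?thesis .
  qed
  have pis: "{\<omega> \<in> space M. \<pi> \<omega> = \<sigma>} \<in> sets M" for \<sigma>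
  proof -
    have "{\<omega> \<in> space M. \<pi> \<omega> = \<sigma>} = \<pi> -` {\<sigma>} \<inter> space M" by auto
    then show ?thesis using measurable_sets[OF \<pi>_meas, of "{\<sigma>}"] by simp
  qed
  have Ev_sets: "Ev \<sigma> \<in> sets M" for \<sigma> unfolding Ev_def using finJ by measurable
  have F_sets: "F \<sigma> \<in> sets M" for \<sigma>
  proof -
    have "F \<sigma> = {\<omega> \<in> space M. \<pi> \<omega> = \<sigma>} \<inter> Ev \<sigma>" unfolding F_def Ev_def by auto
    then show ?thesis using pis Ev_sets by auto
  qed
  have F_meas: "measure M (F \<sigma>) = measure M (Ev \<sigma>) / fact nk" if \<sigma>: "\<sigma> \<in> PJ" for \<sigma>
  proof -
    have "F \<sigma> = {\<omega> \<in> space M. \<pi> \<omega> = \<sigma> \<and> (Gam \<omega>, N \<omega>, A \<omega>) \<in> ES \<sigma>}" unfolding F_def ES_def by auto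
    moreover have "Ev \<sigma> = {\<omega> \<in> space M. (Gam \<omega>, N \<omega>, A \<omega>) \<in> ES \<sigma>}" unfolding Ev_def ES_def by auto
    ultimately show ?thesis using \<pi>_indep ES_sets[of \<sigma>] \<pi>_unif \<sigma> unfolding PJ_def J_def nk_def by simp
  qed
  have U: "{\<omega> \<in> space M. m + N \<omega> = k \<and> (\<forall>j\<in>{m+1..k}. A \<omega> (\<pi> \<omega> j) \<in> B j)} = (\<Union>\<sigma>\<in>PJ. F \<sigma>)"
    unfolding F_def PJ_def J_def using \<pi>_perm by auto
  have disj: "disjoint_family_on F PJ" unfolding disjoint_family_on_def F_def by auto
  have "measure M {\<omega> \<in> space M. m + N \<omega> = k \<and> (\<forall>j\<in>{m+1..k}. A \<omega> (\<pi> \<omega> j) \<in> B j)}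
      = (\<Sum>\<sigma>\<in>PJ. measure M (F \<sigma>))"
    unfolding U by (rule measure_finite_Union) (use finPJ disj F_sets in \<open>auto simp: emeasure_finite\<close>)
  also have "\<dots> = (\<Sum>\<sigma>\<in>PJ. measure M (Ev \<sigma>)) / fact nk"
    by (simp add: F_meas sum_divide_distrib)
  also have "(\<Sum>\<sigma>\<in>PJ. measure M (Ev \<sigma>)) = (\<Sum>\<sigma>\<in>{\<sigma>. \<sigma> permutes {..<nk}}.
        measure M {\<omega> \<in> space M. N \<omega> = nk \<and> (\<forall>i<nk. A \<omega> (m+1+\<sigma> i) \<in> B (m+1+i))})"
  proof -
    define f where "f i = m + 1 + i" for i :: nat
    have bf: "bij_betw f {..<nk} J"
    proof (rule bij_betw_imageI)
      show "inj_on f {..<nk}" unfolding f_def by (auto simp: inj_on_def)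
      show "f ` {..<nk} = J"
      proof (intro equalityI subsetI)
        fix j assume "j \<in> J"
        then have "j = f (j - m - 1)" "j - m - 1 < nk" unfolding f_def J_def nk_def by auto
        then show "j \<in> f ` {..<nk}" by blast
      qed (auto simp: f_def J_def nk_def)
    qed
    have invf: "inv_into {..<nk} f (f i) = i" if "i < nk" for i
      using inv_into_f_f[OF bij_betw_imp_inj_on[OF bf], of i] that by simp
    define T where "T \<sigma>' = (\<lambda>x. if x \<in> J then f (\<sigma>' (inv_into {..<nk} f x)) else x)" for \<sigma>' :: "nat \<Rightarrow> nat"
    have bT: "bij_betw T {\<sigma>. \<sigma> permutes {..<nk}} PJ"
      unfolding T_def PJ_def by (rule bij_betw_permutations[OF bf])
    have "(\<Sum>\<sigma>\<in>PJ. measure M (Ev \<sigma>)) = (\<Sum>\<sigma>'\<in>{\<sigma>. \<sigma> permutes {..<nk}}. measure M (Ev (T \<sigma>')))"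
      by (rule sum.reindex_bij_betw[OF bT, symmetric])
    also have "\<dots> = (\<Sum>\<sigma>\<in>{\<sigma>. \<sigma> permutes {..<nk}}.
        measure M {\<omega> \<in> space M. N \<omega> = nk \<and> (\<forall>i<nk. A \<omega> (m+1+\<sigma> i) \<in> B (m+1+i))})"
    proof (rule sum.cong[OF refl])
      fix \<sigma>' assume "\<sigma>' \<in> {\<sigma>. \<sigma> permutes {..<nk}}"
      have "(\<forall>j\<in>J. A \<omega> (T \<sigma>' j) \<in> B j) \<longleftrightarrow> (\<forall>i<nk. A \<omega> (m+1+\<sigma>' i) \<in> B (m+1+i))" for \<omega>
      proof
        assume a: "\<forall>j\<in>J. A \<omega> (T \<sigma>' j) \<in> B j"
        show "\<forall>i<nk. A \<omega> (m+1+\<sigma>' i) \<in> B (m+1+i)"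
        proof (intro allI impI)
          fix i assume i: "i < nk"
          have "f i \<in> J" using i m1i_J unfolding f_def by simp
          then have "A \<omega> (T \<sigma>' (f i)) \<in> B (f i)" using a by blast
          moreover have "T \<sigma>' (f i) = f (\<sigma>' i)" using \<open>f i \<in> J\<close> invf[OF i] unfolding T_def by simp
          ultimately show "A \<omega> (m+1+\<sigma>' i) \<in> B (m+1+i)" unfolding f_def by simp
        qed
      next
        assume a: "\<forall>i<nk. A \<omega> (m+1+\<sigma>' i) \<in> B (m+1+i)"
        show "\<forall>j\<in>J. A \<omega> (T \<sigma>' j) \<in> B j"
        proof
          fix j assume j: "j \<in> J"
          then obtain i where i: "i < nk" "j = f i" using bf unfolding bij_betw_def by auto
          have "T \<sigma>' j = f (\<sigma>' i)" using j i invf[OF i(1)] unfolding T_def by simp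
          then show "A \<omega> (T \<sigma>' j) \<in> B j" using a i unfolding f_def by simp
        qed
      qed
      moreover have "m + N \<omega> = k \<longleftrightarrow> N \<omega> = nk" for \<omega> unfolding nk_def using k by auto
      ultimately show "measure M (Ev (T \<sigma>')) = measure M {\<omega> \<in> space M. N \<omega> = nk \<and> (\<forall>i<nk. A \<omega> (m+1+\<sigma>' i) \<in> B (m+1+i))}"
        unfolding Ev_def by simp
    qed
    finally show ?thesis .
  qed
  also have "\<dots> = fact nk * (Pn * (\<Prod>i<nk. nu (B (m+1+i)) / Z))" by (rule main_sum)
  also have "(\<Prod>i<nk. nu (B (m+1+i)) / Z) = (\<Prod>j\<in>{m+1..k}. nu (B j) / Z)"
  proof -
    have "bij_betw (\<lambda>i. m + 1 + i) {..<nk} {m+1..k}"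
    proof (rule bij_betw_imageI)
      show "inj_on (\<lambda>i. m + 1 + i) {..<nk}" by (auto simp: inj_on_def)
      show "(\<lambda>i. m + 1 + i) ` {..<nk} = {m+1..k}"
      proof (intro equalityI subsetI)
        fix j assume "j \<in> {m+1..k}"
        then have "j = m + 1 + (j - m - 1)" "j - m - 1 < nk" unfolding nk_def by auto
        then show "j \<in> (\<lambda>i. m + 1 + i) ` {..<nk}" by blast
      qed (auto simp: nk_def)
    qed
    then show ?thesis by (rule prod.reindex_bij_betw)
  qed
  finally show ?thesis by simp
qed

end

context ppt
begin

lemma tail_int:
  assumes s0: "0 \<le> s" and s1: "s < 1"
  shows "(LINT y:{x..}|lborel. f_dens s tau y)
       = (if x \<le> s then 1 else if x \<le> 1 then (1 - x powr al) / (1 - s powr al) else 0)"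
proof -
  have sal: "s powr al < 1"
  proof (cases "s = 0")
    case False
    then show ?thesis using powr_less_mono2[of al s 1] al_pos s0 s1 by simp
  qed simp
  define D where "D = (tau - 1) * (1 - s powr al)"
  have D: "D > 0" unfolding D_def using sal tau1 by simp
  have key: "(1 - u) / al / D = (1 - u) / (1 - s powr al)" for u
  proof -
    have "(1 - u) / al / D = (1 - u) / ((al * (tau - 1)) * (1 - s powr al))"
      unfolding D_def by (simp add: mult.assoc)
    then show ?thesis using al_tau by simp
  qed
  have fd: "indicator {x..} y *\<^sub>R f_dens s tau y = (indicator ({x..} \<inter> {s..1}) y *\<^sub>R y powr (al - 1)) / D" for y
    unfolding f_dens_def D_def al_def indicator_inter_arith by simp
  have "(LINT y:{x..}|lborel. f_dens s tau y) = (LINT y:({x..} \<inter> {s..1})|lborel. y powr (al - 1)) / D"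
    unfolding set_lebesgue_integral_def fd by simp
  also have "\<dots> = (if x \<le> s then 1 else if x \<le> 1 then (1 - x powr al) / (1 - s powr al) else 0)"
  proof (cases "x \<le> s")
    case True
    then have "{x..} \<inter> {s..1} = {s..1}" by auto
    moreover have "(LINT y:{s..1}|lborel. y powr (al - 1)) = (1 - s powr al) / al"
      using powr_int(2)[of s 1 "al - 1"] s0 s1 al_pos by simp
    ultimately show ?thesis using key[of "s powr al"] sal True by simp
  next
    case False
    show ?thesis
    proof (cases "x \<le> 1")
      case True
      then have "{x..} \<inter> {s..1} = {x..1}" using False by auto
      moreover have "(LINT y:{x..1}|lborel. y powr (al - 1)) = (1 - x powr al) / al"
        using powr_int(2)[of x 1 "al - 1"] s0 False True al_pos by simp
      ultimately show ?thesis using key[of "x powr al"] False True by simp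
    next
      case x1: False
      then have "{x..} \<inter> {s..1} = {}" by auto
      then show ?thesis using False x1 by (simp add: set_lebesgue_integral_def)
    qed
  qed
  finally show ?thesis .
qed

lemma tail_ineq:
  assumes s: "0 < s" "s < 1"
  shows "(LINT y:{x..}|lborel. f_dens 0 tau y) \<le> (LINT y:{x..}|lborel. f_dens s tau y)"
proof -
  have sal: "s powr al < 1" using powr_less_mono2[of al s 1] al_pos s by simp
  have sal0: "0 \<le> s powr al" by simp
  show ?thesis
    unfolding tail_int[of 0, OF order_refl zero_less_one] tail_int[of s, OF less_imp_le[OF s(1)] s(2)]
  proof (cases "x \<le> 0")
    case True
    then show "(if x \<le> 0 then 1 else if x \<le> 1 then (1 - x powr al) / (1 - 0 powr al) else 0)
      \<le> (if x \<le> s then 1 else if x \<le> 1 then (1 - x powr al) / (1 - s powr al) else 0)"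
      using s by simp
  next
    case False
    have xal: "0 \<le> x powr al" by simp
    show "(if x \<le> 0 then 1 else if x \<le> 1 then (1 - x powr al) / (1 - 0 powr al) else 0)
      \<le> (if x \<le> s then 1 else if x \<le> 1 then (1 - x powr al) / (1 - s powr al) else 0)"
    proof (cases "x \<le> 1")
      case True
      have x1: "x powr al \<le> 1" using powr_mono2[of al x 1] True False al_pos by simp
      have "1 - x powr al \<le> (1 - x powr al) / (1 - s powr al)"
        using x1 sal sal0 by (simp add: le_divide_eq mult_left_le)
      then show ?thesis using False True xal by auto
    next
      case x1: False
      then show ?thesis using False s by simp
    qed
  qed
qed

end


theorem mainTheorem8:
  fixes M :: "'w measure" and m k :: nat and \<delta> t :: real
    and Gam :: "'w \<Rightarrow> real" and N :: "'w \<Rightarrow> nat" and A :: "'w \<Rightarrow> nat \<Rightarrow> real"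
    and \<pi> :: "'w \<Rightarrow> nat \<Rightarrow> nat"
  assumes m: "m \<ge> 1" and \<delta>: "\<delta> > - real m" and k: "k > m" and t: "0 < t" "t < 1"
    and root: "polya_root_younger M m \<delta> t Gam N A"
    and \<pi>_meas: "\<pi> \<in> measurable M (count_space UNIV)"
    and \<pi>_perm: "\<forall>\<omega>\<in>space M. \<pi> \<omega> permutes {m+1..k}"
    and \<pi>_unif: "\<forall>\<sigma>. \<sigma> permutes {m+1..k} \<longrightarrow>
                    measure M {\<omega> \<in> space M. \<pi> \<omega> = \<sigma>} = 1 / fact (k - m)"
    and \<pi>_indep: "\<forall>\<sigma> E. E \<in> sets (borel \<Otimes>\<^sub>M count_space UNIV \<Otimes>\<^sub>M Pi\<^sub>M UNIV (\<lambda>_. borel)) \<longrightarrow>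
                    measure M {\<omega> \<in> space M. \<pi> \<omega> = \<sigma> \<and> (Gam \<omega>, N \<omega>, A \<omega>) \<in> E}
                    = measure M {\<omega> \<in> space M. \<pi> \<omega> = \<sigma>}
                      * measure M {\<omega> \<in> space M. (Gam \<omega>, N \<omega>, A \<omega>) \<in> E}"
  shows "measure M {\<omega> \<in> space M. m + N \<omega> = k} > 0
       \<and> (\<forall>B :: nat \<Rightarrow> real set. (\<forall>j. B j \<in> sets borel) \<longrightarrow>
            measure M {\<omega> \<in> space M. m + N \<omega> = k \<and> (\<forall>j\<in>{m+1..k}. A \<omega> (\<pi> \<omega> j) \<in> B j)}
              / measure M {\<omega> \<in> space M. m + N \<omega> = k}
            = (\<Prod>j\<in>{m+1..k}. LINT x:B j|lborel. f_dens t (tau_par m \<delta>) x))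
       \<and> (\<forall>s::real. 0 < s \<and> s < 1 \<longrightarrow> (\<forall>x::real.
            (LINT y:{x..}|lborel. f_dens 0 (tau_par m \<delta>) y)
              \<le> (LINT y:{x..}|lborel. f_dens s (tau_par m \<delta>) y)))"
proof -
  have ps: "prob_space M" using conjunct1[OF root[unfolded polya_root_younger_def]] .
  have pp: "ppt M m \<delta> t Gam N A"
    by (rule ppt.intro[OF ps], rule ppt_axioms.intro[OF m \<delta> t(1) t(2) root])
  interpret P: ppt M m \<delta> t Gam N A by (rule pp)
  have Neq: "{\<omega> \<in> space M. m + N \<omega> = k} = {\<omega> \<in> space M. N \<omega> = k - m}" using k by auto
  have pos: "measure M {\<omega> \<in> space M. m + N \<omega> = k} > 0" unfolding Neq by (rule P.Pn_pos)
  have part2: "\<forall>B :: nat \<Rightarrow> real set. (\<forall>j. B j \<in> sets borel) \<longrightarrow>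
            measure M {\<omega> \<in> space M. m + N \<omega> = k \<and> (\<forall>j\<in>{m+1..k}. A \<omega> (\<pi> \<omega> j) \<in> B j)}
              / measure M {\<omega> \<in> space M. m + N \<omega> = k}
            = (\<Prod>j\<in>{m+1..k}. LINT x:B j|lborel. f_dens t (tau_par m \<delta>) x)"
  proof (intro allI impI)
    fix B :: "nat \<Rightarrow> real set" assume Bb: "\<forall>j. B j \<in> sets borel"
    have pp2: "ppt2 M m \<delta> t Gam N A k B"
      by (rule ppt2.intro[OF pp], rule ppt2_axioms.intro) (use k Bb in auto)
    interpret Q: ppt2 M m \<delta> t Gam N A k B by (rule pp2)
    have num: "measure M {\<omega> \<in> space M. m + N \<omega> = k \<and> (\<forall>j\<in>{m+1..k}. A \<omega> (\<pi> \<omega> j) \<in> B j)}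
       = Q.Pn * (\<Prod>j\<in>{m+1..k}. P.nu (B j) / P.Z)"
      by (rule Q.num_eq[OF \<pi>_meas \<pi>_perm \<pi>_unif \<pi>_indep])
    have den: "Q.Pn = measure M {\<omega> \<in> space M. m + N \<omega> = k}"
      unfolding Q.Pn_def Q.nk_def Neq ..
    have prd: "(\<Prod>j\<in>{m+1..k}. LINT x:B j|lborel. f_dens t (tau_par m \<delta>) x) = (\<Prod>j\<in>{m+1..k}. P.nu (B j) / P.Z)"
      using P.f_dens_int unfolding P.tau_def by simp
    show "measure M {\<omega> \<in> space M. m + N \<omega> = k \<and> (\<forall>j\<in>{m+1..k}. A \<omega> (\<pi> \<omega> j) \<in> B j)}
              / measure M {\<omega> \<in> space M. m + N \<omega> = k}
            = (\<Prod>j\<in>{m+1..k}. LINT x:B j|lborel. f_dens t (tau_par m \<delta>) x)"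
      unfolding num prd den[symmetric] using pos den by simp
  qed
  have part3: "\<forall>s::real. 0 < s \<and> s < 1 \<longrightarrow> (\<forall>x::real.
            (LINT y:{x..}|lborel. f_dens 0 (tau_par m \<delta>) y)
              \<le> (LINT y:{x..}|lborel. f_dens s (tau_par m \<delta>) y))"
    using P.tail_ineq unfolding P.tau_def by blast
  show ?thesis using pos part2 part3 by blast
qed

end
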